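(* Let $G=(V,E)$ be a temporal graph whose edges are listed in a fixed chronological order $e_1,\dots,e_m$ (nondecreasing timestamps), let $\mathcal{P}=(P_1,\dots,P_R)$ be a partition of $V$, fix a level $h$ and positive parameters $\lambda_{ijh}>0$ ($1\le i\le j\le R$). For edges $s,e$ define $y(s,e;h)=\sum_{1\le i\le j\le R}\big(\mathrm{cnt}(P_i,P_j,(t(s),t(e)])\log\lambda_{ijh}-|P_i\times P_j|\,\lambda_{ijh}(t(e)-t(s))\big)$ if $s$ does not come after $e$ in the order, and $y(s,e;h)=-\infty$ otherwise. Let $o:E\to\mathbb{R}\cup\{-\infty\}$ be arbitrary and set $x(s,e)=y(s,e;h)+o(s)$. Then $x$ is totally monotone: for all indices $i_1<i_2$ and $j_1<j_2$, if $x(e_{i_2},e_{j_1})>x(e_{i_1},e_{j_1})$ then $x(e_{i_2},e_{j_2})\ge x(e_{i_1},e_{j_2})$.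
   Context: A temporal graph $G=(V,E)$ consists of a finite node set $V$ and a finite multiset $E$ of undirected edges $(u,v,t)$, $u\ne v$, with timestamp $t\in\mathbb{R}$; $t(e)$ denotes the timestamp of edge $e$. For a time interval $T$ and $U,W\subseteq V$, $\mathrm{cnt}(U,W,T)$ is the number of edges with one endpoint in $U$, the other in $W$ (counting each unordered node pair once, endpoints distinct) and timestamp in $T$; $|U\times W|$ is the number of unordered pairs $\{u,w\}$ with $u\in U$, $w\in W$, $u\ne w$. Thus $y(s,e;h)$ is the Poisson log-likelihood of the segment $(t(s),t(e)]$ under the level-$h$ parameters. In the paper, $o(s)$ plays the role of the optimal log-likelihood of a $(k-1)$-segmentation covering edges up to $s$. *)

theory Defs
  imports Complex_Main "HOL-Library.Extended_Real"
begin

text \<open>A temporal edge (u, v, t): endpoints u, v and timestamp t.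
  The multiset E of edges is given as a list in a fixed chronological order
  e_1, ..., e_m (positions 0 .. m-1 in the list).\<close>
type_synonym 'v tedge = "'v \<times> 'v \<times> real"

definition tm :: "'v tedge \<Rightarrow> real" where
  "tm e = snd (snd e)"

definition temporal_graph :: "'v set \<Rightarrow> 'v tedge list \<Rightarrow> bool" where
  "temporal_graph V E \<longleftrightarrow> finite V \<and>
     (\<forall>(u, v, t) \<in> set E. u \<in> V \<and> v \<in> V \<and> u \<noteq> v)"

definition chronological :: "'v tedge list \<Rightarrow> bool" where
  "chronological E \<longleftrightarrow> sorted (map tm E)"

definition is_partition :: "'v set \<Rightarrow> nat \<Rightarrow> (nat \<Rightarrow> 'v set) \<Rightarrow> bool" where
  "is_partition V R P \<longleftrightarrow>
     (\<forall>i\<in>{1..R}. P i \<noteq> {} \<and> P i \<subseteq> V) \<and>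
     (\<forall>i\<in>{1..R}. \<forall>j\<in>{1..R}. i \<noteq> j \<longrightarrow> P i \<inter> P j = {}) \<and>
     (\<Union>i\<in>{1..R}. P i) = V"

text \<open>cnt(U, W, (a, b]): number of edges (counted with multiplicity, i.e. by position
  in the edge list) with one endpoint in U and the other in W and timestamp in (a, b].\<close>
definition cnt :: "'v tedge list \<Rightarrow> 'v set \<Rightarrow> 'v set \<Rightarrow> real \<Rightarrow> real \<Rightarrow> nat" where
  "cnt E U W a b = card {k. k < length E \<and>
     (case E ! k of (u, v, t) \<Rightarrow>
        u \<noteq> v \<and> a < t \<and> t \<le> b \<and> ((u \<in> U \<and> v \<in> W) \<or> (u \<in> W \<and> v \<in> U)))}"

definition pairs_card :: "'v set \<Rightarrow> 'v set \<Rightarrow> nat" where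
  "pairs_card U W = card {{u, w} | u w. u \<in> U \<and> w \<in> W \<and> u \<noteq> w}"

definition seg_ll :: "'v tedge list \<Rightarrow> nat \<Rightarrow> (nat \<Rightarrow> 'v set) \<Rightarrow>
    (nat \<Rightarrow> nat \<Rightarrow> nat \<Rightarrow> real) \<Rightarrow> nat \<Rightarrow> nat \<Rightarrow> nat \<Rightarrow> ereal" where
  "seg_ll E R P lam h s e =
     (if s \<le> e then
        ereal (\<Sum>i\<in>{1..R}. \<Sum>j\<in>{i..R}.
           real (cnt E (P i) (P j) (tm (E ! s)) (tm (E ! e))) * ln (lam i j h)
           - real (pairs_card (P i) (P j)) * lam i j h * (tm (E ! e) - tm (E ! s)))
      else -\<infinity>)"

end

theory Submission
  imports Defs
begin

definition Ncnt :: "'v tedge list \<Rightarrow> 'v set \<Rightarrow> 'v set \<Rightarrow> real \<Rightarrow> nat" where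
  "Ncnt E U W b = card {k. k < length E \<and>
     (case E ! k of (u, v, t) \<Rightarrow>
        u \<noteq> v \<and> t \<le> b \<and> ((u \<in> U \<and> v \<in> W) \<or> (u \<in> W \<and> v \<in> U)))}"

lemma cnt_diff:
  assumes "a \<le> b"
  shows "real (cnt E U W a b) = real (Ncnt E U W b) - real (Ncnt E U W a)"
proof -
  let ?A = "{k. k < length E \<and>
     (case E ! k of (u, v, t) \<Rightarrow>
        u \<noteq> v \<and> t \<le> a \<and> ((u \<in> U \<and> v \<in> W) \<or> (u \<in> W \<and> v \<in> U)))}"
  let ?B = "{k. k < length E \<and>
     (case E ! k of (u, v, t) \<Rightarrow>
        u \<noteq> v \<and> t \<le> b \<and> ((u \<in> U \<and> v \<in> W) \<or> (u \<in> W \<and> v \<in> U)))}"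
  let ?C = "{k. k < length E \<and>
     (case E ! k of (u, v, t) \<Rightarrow>
        u \<noteq> v \<and> a < t \<and> t \<le> b \<and> ((u \<in> U \<and> v \<in> W) \<or> (u \<in> W \<and> v \<in> U)))}"
  have sub: "?A \<subseteq> ?B" using assms by (auto split: prod.splits)
  have eq: "?C = ?B - ?A"
  proof (rule set_eqI)
    fix k
    obtain u v t where "E ! k = (u, v, t)" by (cases "E ! k") auto
    thus "k \<in> ?C \<longleftrightarrow> k \<in> ?B - ?A" by auto
  qed
  have fin: "finite ?B" by simp
  have "card ?C = card ?B - card ?A" using eq card_Diff_subset[OF finite_subset[OF sub fin] sub] by simp
  moreover have "card ?A \<le> card ?B" using card_mono[OF fin sub] .
  ultimately show ?thesis unfolding cnt_def Ncnt_def by simp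
qed

definition Fv :: "'v tedge list \<Rightarrow> nat \<Rightarrow> (nat \<Rightarrow> 'v set) \<Rightarrow>
    (nat \<Rightarrow> nat \<Rightarrow> nat \<Rightarrow> real) \<Rightarrow> nat \<Rightarrow> nat \<Rightarrow> real" where
  "Fv E R P lam h e = (\<Sum>i\<in>{1..R}. \<Sum>j\<in>{i..R}.
           real (Ncnt E (P i) (P j) (tm (E ! e))) * ln (lam i j h)
           - real (pairs_card (P i) (P j)) * lam i j h * tm (E ! e))"

lemma seg_eq:
  assumes "chronological E" "s \<le> e" "e < length E"
  shows "seg_ll E R P lam h s e = ereal (Fv E R P lam h e - Fv E R P lam h s)"
proof -
  have "tm (E ! s) \<le> tm (E ! e)"
    using assms sorted_nth_mono[of "map tm E" s e] unfolding chronological_def by auto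
  hence "\<And>i j. real (cnt E (P i) (P j) (tm (E ! s)) (tm (E ! e))) * ln (lam i j h)
           - real (pairs_card (P i) (P j)) * lam i j h * (tm (E ! e) - tm (E ! s))
       = (real (Ncnt E (P i) (P j) (tm (E ! e))) * ln (lam i j h)
           - real (pairs_card (P i) (P j)) * lam i j h * tm (E ! e))
        - (real (Ncnt E (P i) (P j) (tm (E ! s))) * ln (lam i j h)
           - real (pairs_card (P i) (P j)) * lam i j h * tm (E ! s))"
    by (simp add: cnt_diff algebra_simps)
  thus ?thesis using assms unfolding seg_ll_def Fv_def by (simp add: sum_subtractf)
qed

theorem proposition5:
  fixes V :: "'v set" and i1 i2 j1 j2 :: nat and E :: "'v tedge list" and R :: nat and P :: "nat \<Rightarrow> 'v set"
    and lam :: "nat \<Rightarrow> nat \<Rightarrow> nat \<Rightarrow> real" and h :: nat and ob :: "nat \<Rightarrow> ereal"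
    and x :: "nat \<Rightarrow> nat \<Rightarrow> ereal"
  assumes "temporal_graph V E"
    and "chronological E"
    and "is_partition V R P"
    and "\<And>i j. 1 \<le> i \<Longrightarrow> i \<le> j \<Longrightarrow> j \<le> R \<Longrightarrow> lam i j h > 0"
    and "\<And>k. ob k \<noteq> \<infinity>"
    and "\<And>s e. x s e = seg_ll E R P lam h s e + ob s"
    and "i1 < i2" and "i2 < length E" and "j1 < j2" and "j2 < length E"
    and "x i2 j1 > x i1 j1"
  shows "x i2 j2 \<ge> x i1 j2"
proof -
  let ?F = "Fv E R P lam h"
  have ninf: "x i2 j1 \<noteq> -\<infinity>" using assms(11) by auto
  have le: "i2 \<le> j1"
  proof (rule ccontr)
    assume "\<not> i2 \<le> j1"
    hence "seg_ll E R P lam h i2 j1 = -\<infinity>" unfolding seg_ll_def by simp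
    thus False using ninf assms(6)[of i2 j1] assms(5)[of i2] by simp
  qed
  have j1l: "j1 < length E" using assms(9,10) by simp
  have s21: "seg_ll E R P lam h i2 j1 = ereal (?F j1 - ?F i2)" using seg_eq[OF assms(2) le j1l] .
  have s11: "seg_ll E R P lam h i1 j1 = ereal (?F j1 - ?F i1)" using seg_eq[OF assms(2) _ j1l] le assms(7) by simp
  have s22: "seg_ll E R P lam h i2 j2 = ereal (?F j2 - ?F i2)" using seg_eq[OF assms(2) _ assms(10)] le assms(9) by simp
  have s12: "seg_ll E R P lam h i1 j2 = ereal (?F j2 - ?F i1)" using seg_eq[OF assms(2) _ assms(10)] le assms(7,9) by simp
  show ?thesis
  proof (cases "ob i1")
    case MInf
    then show ?thesis using assms(6)[of i1 j2] s12 by simp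
  next
    case PInf then show ?thesis using assms(5) by simp
  next
    case (real a)
    then obtain b where b: "ob i2 = ereal b"
      using ninf assms(6)[of i2 j1] s21 assms(5)[of i2] by (cases "ob i2") auto
    have "?F j1 - ?F i2 + b > ?F j1 - ?F i1 + a"
      using assms(11) assms(6)[of i2 j1] assms(6)[of i1 j1] s21 s11 b real by simp
    hence "?F j2 - ?F i2 + b \<ge> ?F j2 - ?F i1 + a" by simp
    then show ?thesis using assms(6)[of i2 j2] assms(6)[of i1 j2] s22 s12 b real by simp
  qed
qed

end
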